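(* Let $A=\begin{bmatrix} 0 & J_{k_1,k_2} & X_1\\ J_{k_1,k_2} & 0 & X_2\\ X_3 & X_4 & Y\end{bmatrix}$ and $B=\begin{bmatrix} J_{k_1,k_2} & 0 & X_1\\ 0 & J_{k_1,k_2} & X_2\\ X_3 & X_4 & Y\end{bmatrix}$ be Gram mates, where $k_1,k_2>0$, $\mathbf{1}^TX_1=\mathbf{1}^TX_2$ and $X_3\mathbf{1}=X_4\mathbf{1}$. Let $R$ and $S$ be the row and column sum vectors of $A$, and conformally partitioned with the rows and the columns of $A$ as $R=(R_1,R_2,R_3)$ and $S=(S_1,S_2,S_3)$, respectively. Suppose that for $i=1,2$, the set of all entries of $R_i$ (resp. $S_i$) does not have any element in common with that of $R_3$ (resp. $S_3$). Then, $A$ is isomorphic to $B$ if and only if the remaining matrix $Y$ is fixable.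
   Context: $J_{p,q}$ is the $p\times q$ all-ones matrix. Two $(0,1)$ matrices $A\neq B$ are Gram mates if $AA^T=BB^T$ and $A^TA=B^TB$; isomorphic if $B=PAQ$ for permutation matrices $P,Q$. For $(0,1)$ matrices $Z_1,Z_2$ of equal size, $\mathcal R_{Z_1,Z_2}$ is the set of triples $(P_1,P_2,Q)$ of permutation matrices with $Z_2=P_1Z_1Q$ and $Z_1=P_2Z_2Q$, and $\mathcal L_{Z_1,Z_2}$ is the set of triples $(P,Q_1,Q_2)$ of permutation matrices with $Z_1=PZ_1Q_1$ and $Z_2=PZ_2Q_2$. $Y$ is fixable if there exist permutation matrices $P,Q$ with $Y=PYQ$ such that either (i) $(P_1,P_2,Q)\in\mathcal R_{X_1,X_2}$ and $(P,Q_3,Q_4)\in\mathcal L_{X_3,X_4}$ for some $P_1,P_2,Q_3,Q_4$, or (ii) $(Q_3,Q_4,P^T)\in\mathcal R_{X_3^T,X_4^T}$ and $(Q^T,P_1,P_2)\in\mathcal L_{X_1^T,X_2^T}$ for some $P_1,P_2,Q_3,Q_4$. *)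

theory Defs
  imports "Jordan_Normal_Form.Matrix" "HOL-Combinatorics.Permutations"
begin

definition all_ones_mat :: "nat \<Rightarrow> nat \<Rightarrow> int mat" where
  "all_ones_mat p q = mat p q (\<lambda>_. 1)"

definition zero_one_mat :: "int mat \<Rightarrow> bool" where
  "zero_one_mat M \<longleftrightarrow> (\<forall>i < dim_row M. \<forall>j < dim_col M. M $$ (i,j) \<in> {0,1})"

definition perm_mat :: "nat \<Rightarrow> int mat \<Rightarrow> bool" where
  "perm_mat n P \<longleftrightarrow> (\<exists>p. p permutes {..<n} \<and>
      P = mat n n (\<lambda>(i,j). if p i = j then 1 else 0))"

text \<open>3 x 3 block matrix; row-block sizes are read off the first block column,
  column-block sizes off the first block row.\<close>
definition block3 :: "int mat \<Rightarrow> int mat \<Rightarrow> int mat \<Rightarrow> int mat \<Rightarrow> int mat \<Rightarrow> int mat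
    \<Rightarrow> int mat \<Rightarrow> int mat \<Rightarrow> int mat \<Rightarrow> int mat" where
  "block3 M11 M12 M13 M21 M22 M23 M31 M32 M33 =
    (let r1 = dim_row M11; r2 = dim_row M21; r3 = dim_row M31;
         c1 = dim_col M11; c2 = dim_col M12; c3 = dim_col M13;
         pick = (\<lambda>i j. if i < r1 then (if j < c1 then M11 $$ (i,j)
                                     else if j < c1 + c2 then M12 $$ (i, j - c1)
                                     else M13 $$ (i, j - c1 - c2))
                       else if i < r1 + r2 then
                                    (if j < c1 then M21 $$ (i - r1, j)
                                     else if j < c1 + c2 then M22 $$ (i - r1, j - c1)
                                     else M23 $$ (i - r1, j - c1 - c2))
                       else (if j < c1 then M31 $$ (i - r1 - r2, j)
                                     else if j < c1 + c2 then M32 $$ (i - r1 - r2, j - c1)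
                                     else M33 $$ (i - r1 - r2, j - c1 - c2)))
     in mat (r1 + r2 + r3) (c1 + c2 + c3) (\<lambda>(i,j). pick i j))"

definition gram_mates :: "int mat \<Rightarrow> int mat \<Rightarrow> bool" where
  "gram_mates A B \<longleftrightarrow> zero_one_mat A \<and> zero_one_mat B \<and>
     dim_row A = dim_row B \<and> dim_col A = dim_col B \<and> A \<noteq> B \<and>
     A * transpose_mat A = B * transpose_mat B \<and>
     transpose_mat A * A = transpose_mat B * B"

definition isomorphic_mat :: "int mat \<Rightarrow> int mat \<Rightarrow> bool" where
  "isomorphic_mat A B \<longleftrightarrow> (\<exists>P Q. perm_mat (dim_row A) P \<and> perm_mat (dim_col A) Q \<and>
      B = P * A * Q)"

definition R_set :: "int mat \<Rightarrow> int mat \<Rightarrow> (int mat \<times> int mat \<times> int mat) set" where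
  "R_set Z1 Z2 = {(P1, P2, Q). perm_mat (dim_row Z1) P1 \<and> perm_mat (dim_row Z1) P2 \<and>
      perm_mat (dim_col Z1) Q \<and> Z2 = P1 * Z1 * Q \<and> Z1 = P2 * Z2 * Q}"

definition L_set :: "int mat \<Rightarrow> int mat \<Rightarrow> (int mat \<times> int mat \<times> int mat) set" where
  "L_set Z1 Z2 = {(P, Q1, Q2). perm_mat (dim_row Z1) P \<and> perm_mat (dim_col Z1) Q1 \<and>
      perm_mat (dim_col Z1) Q2 \<and> Z1 = P * Z1 * Q1 \<and> Z2 = P * Z2 * Q2}"

definition fixable :: "int mat \<Rightarrow> int mat \<Rightarrow> int mat \<Rightarrow> int mat \<Rightarrow> int mat \<Rightarrow> bool" where
  "fixable X1 X2 X3 X4 Y \<longleftrightarrow> (\<exists>P Q. perm_mat (dim_row Y) P \<and> perm_mat (dim_col Y) Q \<and>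
      Y = P * Y * Q \<and>
      ((\<exists>P1 P2 Q3 Q4. (P1, P2, Q) \<in> R_set X1 X2 \<and> (P, Q3, Q4) \<in> L_set X3 X4) \<or>
       (\<exists>P1 P2 Q3 Q4. (Q3, Q4, transpose_mat P) \<in> R_set (transpose_mat X3) (transpose_mat X4) \<and>
                      (transpose_mat Q, P1, P2) \<in> L_set (transpose_mat X1) (transpose_mat X2))))"

definition row_sum :: "int mat \<Rightarrow> nat \<Rightarrow> int" where
  "row_sum M i = (\<Sum>j < dim_col M. M $$ (i,j))"

definition col_sum :: "int mat \<Rightarrow> nat \<Rightarrow> int" where
  "col_sum M j = (\<Sum>i < dim_row M. M $$ (i,j))"

end

theory Submission
  imports Defs
begin


abbreviation iv :: "(nat \<Rightarrow> nat) \<Rightarrow> nat \<Rightarrow> nat" where "iv f \<equiv> Hilbert_Choice.inv f"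

definition pmat :: "nat \<Rightarrow> (nat \<Rightarrow> nat) \<Rightarrow> int mat" where
  "pmat n p = mat n n (\<lambda>(i,j). if p i = j then 1 else 0)"

lemma perm_mat_pmat: "p permutes {..<n} \<Longrightarrow> perm_mat n (pmat n p)"
  unfolding perm_mat_def pmat_def by blast

lemma perm_mat_obtain: "perm_mat n P \<Longrightarrow> \<exists>p. p permutes {..<n} \<and> P = pmat n p"
  unfolding perm_mat_def pmat_def by blast

lemma pmat_carrier[simp]: "pmat n p \<in> carrier_mat n n" by (simp add: pmat_def)

lemma perm_lt: "p permutes {..<n} \<Longrightarrow> i < n \<Longrightarrow> p i < n"
  using permutes_in_image[of p "{..<n}" i] by simp

lemma perm_inv_lt: "p permutes {..<n} \<Longrightarrow> i < n \<Longrightarrow> iv p i < n"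
  using perm_lt[OF permutes_inv] by blast

lemma pmat_left:
  assumes p: "p permutes {..<r}" and A: "A \<in> carrier_mat r c"
  shows "pmat r p * A = mat r c (\<lambda>(i,j). A $$ (p i, j))"
proof (rule eq_matI)
  fix i j assume i: "i < dim_row (mat r c (\<lambda>(i,j). A $$ (p i, j)))" and j: "j < dim_col (mat r c (\<lambda>(i,j). A $$ (p i, j)))"
  have pi: "p i < r" using i p by (simp add: perm_lt)
  have "(pmat r p * A) $$ (i,j) = (\<Sum>l\<in>{0..<r}. (if p i = l then 1 else 0) * A $$ (l, j))"
    using i j A by (simp add: pmat_def scalar_prod_def)
  also have "\<dots> = (\<Sum>l\<in>{0..<r}. if p i = l then A $$ (l, j) else 0)"
    by (rule sum.cong) auto
  also have "\<dots> = A $$ (p i, j)" using pi by (simp add: sum.delta)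
  finally show "(pmat r p * A) $$ (i,j) = mat r c (\<lambda>(i,j). A $$ (p i, j)) $$ (i,j)"
    using i j by simp
qed (use A in \<open>auto simp: pmat_def\<close>)

lemma pmat_right:
  assumes q: "q permutes {..<c}" and A: "A \<in> carrier_mat r c"
  shows "A * pmat c q = mat r c (\<lambda>(i,j). A $$ (i, iv q j))"
proof (rule eq_matI)
  fix i j assume i: "i < dim_row (mat r c (\<lambda>(i,j). A $$ (i, iv q j)))" and j: "j < dim_col (mat r c (\<lambda>(i,j). A $$ (i, iv q j)))"
  have qj: "iv q j < c" using j q by (simp add: perm_inv_lt)
  have "(A * pmat c q) $$ (i,j) = (\<Sum>l\<in>{0..<c}. A $$ (i, l) * (if q l = j then 1 else 0))"
    using i j A by (simp add: pmat_def scalar_prod_def)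
  also have "\<dots> = (\<Sum>l\<in>{0..<c}. if l = iv q j then A $$ (i, l) else 0)"
  proof (rule sum.cong)
    fix l have "q l = j \<longleftrightarrow> l = iv q j" by (metis permutes_inverses(1,2)[OF q])
    then show "A $$ (i, l) * (if q l = j then 1 else 0) = (if l = iv q j then A $$ (i, l) else 0)" by simp
  qed simp
  also have "\<dots> = A $$ (i, iv q j)" using qj by (simp add: sum.delta')
  finally show "(A * pmat c q) $$ (i,j) = mat r c (\<lambda>(i,j). A $$ (i, iv q j)) $$ (i,j)"
    using i j by simp
qed (use A in \<open>auto simp: pmat_def\<close>)

lemma pmat_conj:
  assumes p: "p permutes {..<r}" and q: "q permutes {..<c}" and A: "A \<in> carrier_mat r c"
  shows "pmat r p * A * pmat c q = mat r c (\<lambda>(i,j). A $$ (p i, iv q j))"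
proof -
  have "pmat r p * A * pmat c q = mat r c (\<lambda>(i,j). A $$ (p i, j)) * pmat c q"
    using pmat_left[OF p A] by simp
  also have "\<dots> = mat r c (\<lambda>(i,j). A $$ (p i, iv q j))"
    using pmat_right[OF q, of "mat r c (\<lambda>(i,j). A $$ (p i, j))" r]
    by (auto intro!: eq_matI simp: perm_inv_lt[OF q])
  finally show ?thesis .
qed

lemma pmat_transpose:
  assumes p: "p permutes {..<n}"
  shows "transpose_mat (pmat n p) = pmat n (iv p)"
  unfolding pmat_def
  by (rule eq_matI) (auto simp: permutes_inv_eq[OF p])

lemma pm_eq:
  assumes A: "A \<in> carrier_mat r c" and B: "B \<in> carrier_mat r c"
    and p: "p permutes {..<r}" and q: "q permutes {..<c}"
  shows "(B = pmat r p * A * pmat c q) \<longleftrightarrow> (\<forall>i<r. \<forall>j<c. B $$ (i,j) = A $$ (p i, iv q j))"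
  unfolding pmat_conj[OF p q A] using B by (auto intro!: eq_matI)



lemma pm_eqT:
  assumes A: "A \<in> carrier_mat r c" and B: "B \<in> carrier_mat r c"
    and p: "p permutes {..<c}" and q: "q permutes {..<r}"
  shows "(transpose_mat B = pmat c p * transpose_mat A * pmat r q) \<longleftrightarrow> (\<forall>i<r. \<forall>j<c. B $$ (i,j) = A $$ (iv q i, p j))"
proof -
  have "(transpose_mat B = pmat c p * transpose_mat A * pmat r q) \<longleftrightarrow>
     (\<forall>j<c. \<forall>i<r. transpose_mat B $$ (j,i) = transpose_mat A $$ (p j, iv q i))"
    by (rule pm_eq) (use A B p q in auto)
  also have "\<dots> \<longleftrightarrow> (\<forall>i<r. \<forall>j<c. B $$ (i,j) = A $$ (iv q i, p j))"
    using A B p q by (auto simp: perm_lt perm_inv_lt)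
  finally show ?thesis .
qed

definition fixF :: "nat \<Rightarrow> nat \<Rightarrow> nat \<Rightarrow> nat \<Rightarrow> int mat \<Rightarrow> int mat \<Rightarrow> int mat \<Rightarrow> int mat \<Rightarrow> int mat \<Rightarrow> bool" where
 "fixF k1 k2 m n X1 X2 X3 X4 Y \<longleftrightarrow> (\<exists>p q. p permutes {..<m} \<and> q permutes {..<n} \<and>
   (\<forall>i<m. \<forall>j<n. Y$$(i,j) = Y$$(p i, q j)) \<and>
  ((\<exists>a b c d. a permutes {..<k1} \<and> b permutes {..<k1} \<and> c permutes {..<k2} \<and> d permutes {..<k2} \<and>
   (\<forall>i<k1. \<forall>j<n. X2$$(i,j) = X1$$(a i, q j) \<and> X1$$(i,j) = X2$$(b i, q j)) \<and>
   (\<forall>i<m. \<forall>j<k2. X3$$(i,j) = X3$$(p i, c j) \<and> X4$$(i,j) = X4$$(p i, d j))) \<or>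
  (\<exists>a b c d. a permutes {..<k1} \<and> b permutes {..<k1} \<and> c permutes {..<k2} \<and> d permutes {..<k2} \<and>
   (\<forall>i<k1. \<forall>j<n. X1$$(i,j) = X1$$(a i, q j) \<and> X2$$(i,j) = X2$$(b i, q j)) \<and>
   (\<forall>i<m. \<forall>j<k2. X4$$(i,j) = X3$$(p i, c j) \<and> X3$$(i,j) = X4$$(p i, d j)))))"

lemma fixable_imp_fixF:
  assumes X1: "X1 \<in> carrier_mat k1 n" and X2: "X2 \<in> carrier_mat k1 n"
    and X3: "X3 \<in> carrier_mat m k2" and X4: "X4 \<in> carrier_mat m k2"
    and Y: "Y \<in> carrier_mat m n"
    and fx: "fixable X1 X2 X3 X4 Y"
  shows "fixF k1 k2 m n X1 X2 X3 X4 Y"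
proof -
  from fx[unfolded fixable_def] obtain P Q where PQ: "perm_mat (dim_row Y) P \<and> perm_mat (dim_col Y) Q \<and> Y = P * Y * Q \<and>
      ((\<exists>P1 P2 Q3 Q4. (P1, P2, Q) \<in> R_set X1 X2 \<and> (P, Q3, Q4) \<in> L_set X3 X4) \<or>
       (\<exists>P1 P2 Q3 Q4. (Q3, Q4, transpose_mat P) \<in> R_set (transpose_mat X3) (transpose_mat X4) \<and>
                      (transpose_mat Q, P1, P2) \<in> L_set (transpose_mat X1) (transpose_mat X2)))"
    by (elim exE)
  have dY: "dim_row Y = m" "dim_col Y = n" using Y by auto
  have P: "perm_mat m P" and Q: "perm_mat n Q" and YPQ: "Y = P * Y * Q" using PQ unfolding dY by blast+
  from PQ have cases: "(\<exists>P1 P2 Q3 Q4. (P1, P2, Q) \<in> R_set X1 X2 \<and> (P, Q3, Q4) \<in> L_set X3 X4) \<or>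
       (\<exists>P1 P2 Q3 Q4. (Q3, Q4, transpose_mat P) \<in> R_set (transpose_mat X3) (transpose_mat X4) \<and>
                      (transpose_mat Q, P1, P2) \<in> L_set (transpose_mat X1) (transpose_mat X2))"
    by (elim conjE)
  obtain p where p: "p permutes {..<m}" and Pp: "P = pmat m p" using perm_mat_obtain[OF P] by blast
  obtain q0 where q0: "q0 permutes {..<n}" and Qq: "Q = pmat n q0" using perm_mat_obtain[OF Q] by blast
  define q where "q = iv q0"
  have q: "q permutes {..<n}" using q0 by (simp add: q_def permutes_inv)
  have Yeq: "\<forall>i<m. \<forall>j<n. Y$$(i,j) = Y$$(p i, q j)"
    unfolding q_def using iffD1[OF pm_eq[OF Y Y p q0] YPQ[unfolded Pp Qq]] .
  from cases show ?thesis
  proof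
    assume "\<exists>P1 P2 Q3 Q4. (P1, P2, Q) \<in> R_set X1 X2 \<and> (P, Q3, Q4) \<in> L_set X3 X4"
    then obtain P1 P2 Q3 Q4 where R: "(P1, P2, Q) \<in> R_set X1 X2" and L: "(P, Q3, Q4) \<in> L_set X3 X4" by blast
    have dX1: "dim_row X1 = k1" "dim_col X1 = n" using X1 by auto
    have P1: "perm_mat k1 P1" and P2: "perm_mat k1 P2" and e1: "X2 = P1 * X1 * Q" and e2: "X1 = P2 * X2 * Q"
      using R unfolding R_set_def dX1 mem_Collect_eq case_prod_conv by blast+
    have dX3: "dim_row X3 = m" "dim_col X3 = k2" using X3 by auto
    have Q3: "perm_mat k2 Q3" and Q4: "perm_mat k2 Q4" and e3: "X3 = P * X3 * Q3" and e4: "X4 = P * X4 * Q4"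
      using L unfolding L_set_def dX3 mem_Collect_eq case_prod_conv by blast+
    obtain a where a: "a permutes {..<k1}" and Pa: "P1 = pmat k1 a" using perm_mat_obtain[OF P1] by blast
    have e1': "\<forall>i<k1. \<forall>j<n. X2$$(i,j) = X1$$(a i, q j)" unfolding q_def using iffD1[OF pm_eq[OF X1 X2 a q0] e1[unfolded Pa Qq]] .
    obtain b where b: "b permutes {..<k1}" and Pb: "P2 = pmat k1 b" using perm_mat_obtain[OF P2] by blast
    have e2': "\<forall>i<k1. \<forall>j<n. X1$$(i,j) = X2$$(b i, q j)" unfolding q_def using iffD1[OF pm_eq[OF X2 X1 b q0] e2[unfolded Pb Qq]] .
    obtain c0 where c0: "c0 permutes {..<k2}" and Pc: "Q3 = pmat k2 c0" using perm_mat_obtain[OF Q3] by blast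
    have e3': "\<forall>i<m. \<forall>j<k2. X3$$(i,j) = X3$$(p i, iv c0 j)" using iffD1[OF pm_eq[OF X3 X3 p c0] e3[unfolded Pc Pp]] .
    obtain d0 where d0: "d0 permutes {..<k2}" and Pd: "Q4 = pmat k2 d0" using perm_mat_obtain[OF Q4] by blast
    have e4': "\<forall>i<m. \<forall>j<k2. X4$$(i,j) = X4$$(p i, iv d0 j)" using iffD1[OF pm_eq[OF X4 X4 p d0] e4[unfolded Pd Pp]] .
    have "\<forall>i<k1. \<forall>j<n. X2$$(i,j) = X1$$(a i, q j) \<and> X1$$(i,j) = X2$$(b i, q j)"
      using e1' e2' by simp
    moreover have "\<forall>i<m. \<forall>j<k2. X3$$(i,j) = X3$$(p i, iv c0 j) \<and> X4$$(i,j) = X4$$(p i, iv d0 j)"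
      using e3' e4' by simp
    ultimately show ?thesis unfolding fixF_def
      apply -
      apply (rule exI[of _ p], rule exI[of _ q], intro conjI p q Yeq disjI1)
      apply (rule exI[of _ a], rule exI[of _ b], rule exI[of _ "iv c0"], rule exI[of _ "iv d0"])
      using a b permutes_inv[OF c0] permutes_inv[OF d0] by simp
  next
    assume "\<exists>P1 P2 Q3 Q4. (Q3, Q4, transpose_mat P) \<in> R_set (transpose_mat X3) (transpose_mat X4) \<and>
                      (transpose_mat Q, P1, P2) \<in> L_set (transpose_mat X1) (transpose_mat X2)"
    then obtain P1 P2 Q3 Q4 where R: "(Q3, Q4, transpose_mat P) \<in> R_set (transpose_mat X3) (transpose_mat X4)"
      and L: "(transpose_mat Q, P1, P2) \<in> L_set (transpose_mat X1) (transpose_mat X2)" by blast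
    have PT: "transpose_mat P = pmat m (iv p)" using Pp pmat_transpose[OF p] by simp
    have QT: "transpose_mat Q = pmat n q" using Qq pmat_transpose[OF q0] q_def by simp
    have dX3: "dim_row (transpose_mat X3) = k2" "dim_col (transpose_mat X3) = m" using X3 by auto
    have Q3: "perm_mat k2 Q3" and Q4: "perm_mat k2 Q4"
      and e3: "transpose_mat X4 = Q3 * transpose_mat X3 * pmat m (iv p)"
      and e4: "transpose_mat X3 = Q4 * transpose_mat X4 * pmat m (iv p)"
      using R unfolding R_set_def PT dX3 mem_Collect_eq case_prod_conv by blast+
    have dX1: "dim_row (transpose_mat X1) = n" "dim_col (transpose_mat X1) = k1" using X1 by auto
    have P1: "perm_mat k1 P1" and P2: "perm_mat k1 P2"
      and e1: "transpose_mat X1 = pmat n q * transpose_mat X1 * P1"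
      and e2: "transpose_mat X2 = pmat n q * transpose_mat X2 * P2"
      using L unfolding L_set_def QT dX1 mem_Collect_eq case_prod_conv by blast+
    have pii: "iv (iv p) = p" using permutes_inv_inv[OF p] .
    obtain a where a: "a permutes {..<k1}" and Pa: "P1 = pmat k1 a" using perm_mat_obtain[OF P1] by blast
    have e1': "\<forall>i<k1. \<forall>j<n. X1$$(i,j) = X1$$(iv a i, q j)" using iffD1[OF pm_eqT[OF X1 X1 q a] e1[unfolded Pa]] .
    obtain b where b: "b permutes {..<k1}" and Pb: "P2 = pmat k1 b" using perm_mat_obtain[OF P2] by blast
    have e2': "\<forall>i<k1. \<forall>j<n. X2$$(i,j) = X2$$(iv b i, q j)" using iffD1[OF pm_eqT[OF X2 X2 q b] e2[unfolded Pb]] .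
    obtain c where c: "c permutes {..<k2}" and Pc: "Q3 = pmat k2 c" using perm_mat_obtain[OF Q3] by blast
    have e3': "\<forall>i<m. \<forall>j<k2. X4$$(i,j) = X3$$(p i, c j)" using iffD1[OF pm_eqT[OF X3 X4 c permutes_inv[OF p]] e3[unfolded Pc]] unfolding pii .
    obtain d where d: "d permutes {..<k2}" and Pd: "Q4 = pmat k2 d" using perm_mat_obtain[OF Q4] by blast
    have e4': "\<forall>i<m. \<forall>j<k2. X3$$(i,j) = X4$$(p i, d j)" using iffD1[OF pm_eqT[OF X4 X3 d permutes_inv[OF p]] e4[unfolded Pd]] unfolding pii .
    have "\<forall>i<k1. \<forall>j<n. X1$$(i,j) = X1$$(iv a i, q j) \<and> X2$$(i,j) = X2$$(iv b i, q j)"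
      using e1' e2' by simp
    moreover have "\<forall>i<m. \<forall>j<k2. X4$$(i,j) = X3$$(p i, c j) \<and> X3$$(i,j) = X4$$(p i, d j)"
      using e3' e4' by simp
    ultimately show ?thesis unfolding fixF_def
      apply -
      apply (rule exI[of _ p], rule exI[of _ q], intro conjI p q Yeq disjI2)
      apply (rule exI[of _ "iv a"], rule exI[of _ "iv b"], rule exI[of _ c], rule exI[of _ d])
      using permutes_inv[OF a] permutes_inv[OF b] c d by simp
  qed
qed

lemma fixF_imp_fixable:
  assumes X1: "X1 \<in> carrier_mat k1 n" and X2: "X2 \<in> carrier_mat k1 n"
    and X3: "X3 \<in> carrier_mat m k2" and X4: "X4 \<in> carrier_mat m k2"
    and Y: "Y \<in> carrier_mat m n"
    and fx: "fixF k1 k2 m n X1 X2 X3 X4 Y"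
  shows "fixable X1 X2 X3 X4 Y"
proof -
  from fx obtain p q where p: "p permutes {..<m}" and q: "q permutes {..<n}"
    and Yeq: "\<forall>i<m. \<forall>j<n. Y$$(i,j) = Y$$(p i, q j)"
    and cases: "(\<exists>a b c d. a permutes {..<k1} \<and> b permutes {..<k1} \<and> c permutes {..<k2} \<and> d permutes {..<k2} \<and>
   (\<forall>i<k1. \<forall>j<n. X2$$(i,j) = X1$$(a i, q j) \<and> X1$$(i,j) = X2$$(b i, q j)) \<and>
   (\<forall>i<m. \<forall>j<k2. X3$$(i,j) = X3$$(p i, c j) \<and> X4$$(i,j) = X4$$(p i, d j))) \<or>
  (\<exists>a b c d. a permutes {..<k1} \<and> b permutes {..<k1} \<and> c permutes {..<k2} \<and> d permutes {..<k2} \<and>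
   (\<forall>i<k1. \<forall>j<n. X1$$(i,j) = X1$$(a i, q j) \<and> X2$$(i,j) = X2$$(b i, q j)) \<and>
   (\<forall>i<m. \<forall>j<k2. X4$$(i,j) = X3$$(p i, c j) \<and> X3$$(i,j) = X4$$(p i, d j)))"
    unfolding fixF_def by blast
  have qi: "iv q permutes {..<n}" using permutes_inv[OF q] .
  have qii: "iv (iv q) = q" using permutes_inv_inv[OF q] .
  have pii: "iv (iv p) = p" using permutes_inv_inv[OF p] .
  define P where "P = pmat m p"
  define Q where "Q = pmat n (iv q)"
  have PP: "perm_mat m P" "perm_mat n Q" using p qi by (auto simp: P_def Q_def perm_mat_pmat)
  have YY: "Y = P * Y * Q" unfolding P_def Q_def
    by (rule iffD2[OF pm_eq[OF Y Y p qi]]) (unfold qii, rule Yeq)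
  have PT: "transpose_mat P = pmat m (iv p)" using P_def pmat_transpose[OF p] by simp
  have QT: "transpose_mat Q = pmat n q" using Q_def pmat_transpose[OF qi] qii by simp
  have dY: "dim_row Y = m" "dim_col Y = n" using Y by auto
  have dX1: "dim_row X1 = k1" "dim_col X1 = n" using X1 by auto
  have dX3: "dim_row X3 = m" "dim_col X3 = k2" using X3 by auto
  have dX1T: "dim_row (transpose_mat X1) = n" "dim_col (transpose_mat X1) = k1" using X1 by auto
  have dX3T: "dim_row (transpose_mat X3) = k2" "dim_col (transpose_mat X3) = m" using X3 by auto
  from cases show ?thesis
  proof (elim disjE exE conjE)
    fix a b c d assume a: "a permutes {..<k1}" and b: "b permutes {..<k1}" and c: "c permutes {..<k2}" and d: "d permutes {..<k2}"
      and e12: "\<forall>i<k1. \<forall>j<n. X2$$(i,j) = X1$$(a i, q j) \<and> X1$$(i,j) = X2$$(b i, q j)"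
      and e34: "\<forall>i<m. \<forall>j<k2. X3$$(i,j) = X3$$(p i, c j) \<and> X4$$(i,j) = X4$$(p i, d j)"
    have e1: "X2 = pmat k1 a * X1 * Q" unfolding Q_def
      by (rule iffD2[OF pm_eq[OF X1 X2 a qi]]) (unfold qii, use e12 in blast)
    have e2: "X1 = pmat k1 b * X2 * Q" unfolding Q_def
      by (rule iffD2[OF pm_eq[OF X2 X1 b qi]]) (unfold qii, use e12 in blast)
    have e3: "X3 = P * X3 * pmat k2 (iv c)" unfolding P_def
      by (rule iffD2[OF pm_eq[OF X3 X3 p permutes_inv[OF c]]]) (unfold permutes_inv_inv[OF c], use e34 in blast)
    have e4: "X4 = P * X4 * pmat k2 (iv d)" unfolding P_def
      by (rule iffD2[OF pm_eq[OF X4 X4 p permutes_inv[OF d]]]) (unfold permutes_inv_inv[OF d], use e34 in blast)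
    have R: "(pmat k1 a, pmat k1 b, Q) \<in> R_set X1 X2"
      unfolding R_set_def dX1 mem_Collect_eq case_prod_conv
      using perm_mat_pmat[OF a] perm_mat_pmat[OF b] PP e1 e2 by blast
    have L: "(P, pmat k2 (iv c), pmat k2 (iv d)) \<in> L_set X3 X4"
      unfolding L_set_def dX3 mem_Collect_eq case_prod_conv
      using perm_mat_pmat[OF permutes_inv[OF c]] perm_mat_pmat[OF permutes_inv[OF d]] PP e3 e4 by blast
    show ?thesis unfolding fixable_def dY using PP YY R L by blast
  next
    fix a b c d assume a: "a permutes {..<k1}" and b: "b permutes {..<k1}" and c: "c permutes {..<k2}" and d: "d permutes {..<k2}"
      and e12: "\<forall>i<k1. \<forall>j<n. X1$$(i,j) = X1$$(a i, q j) \<and> X2$$(i,j) = X2$$(b i, q j)"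
      and e34: "\<forall>i<m. \<forall>j<k2. X4$$(i,j) = X3$$(p i, c j) \<and> X3$$(i,j) = X4$$(p i, d j)"
    have e3: "transpose_mat X4 = pmat k2 c * transpose_mat X3 * pmat m (iv p)"
      by (rule iffD2[OF pm_eqT[OF X3 X4 c permutes_inv[OF p]]]) (unfold pii, use e34 in blast)
    have e4: "transpose_mat X3 = pmat k2 d * transpose_mat X4 * pmat m (iv p)"
      by (rule iffD2[OF pm_eqT[OF X4 X3 d permutes_inv[OF p]]]) (unfold pii, use e34 in blast)
    have e1: "transpose_mat X1 = pmat n q * transpose_mat X1 * pmat k1 (iv a)"
      by (rule iffD2[OF pm_eqT[OF X1 X1 q permutes_inv[OF a]]]) (unfold permutes_inv_inv[OF a], use e12 in blast)
    have e2: "transpose_mat X2 = pmat n q * transpose_mat X2 * pmat k1 (iv b)"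
      by (rule iffD2[OF pm_eqT[OF X2 X2 q permutes_inv[OF b]]]) (unfold permutes_inv_inv[OF b], use e12 in blast)
    have R: "(pmat k2 c, pmat k2 d, transpose_mat P) \<in> R_set (transpose_mat X3) (transpose_mat X4)"
      unfolding R_set_def PT dX3T mem_Collect_eq case_prod_conv
      using perm_mat_pmat[OF c] perm_mat_pmat[OF d] perm_mat_pmat[OF permutes_inv[OF p]] e3 e4 by blast
    have L: "(transpose_mat Q, pmat k1 (iv a), pmat k1 (iv b)) \<in> L_set (transpose_mat X1) (transpose_mat X2)"
      unfolding L_set_def QT dX1T mem_Collect_eq case_prod_conv
      using perm_mat_pmat[OF permutes_inv[OF a]] perm_mat_pmat[OF permutes_inv[OF b]] perm_mat_pmat[OF q] e1 e2 by blast
    show ?thesis unfolding fixable_def dY using PP YY R L by blast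
  qed
qed



lemma permutes_by_inj:
  fixes f :: "nat \<Rightarrow> nat" and N :: nat
  assumes "\<forall>i<N. f i < N" "inj_on f {..<N}" "\<forall>i\<ge>N. f i = i"
  shows "f permutes {..<N}"
proof (rule bij_imp_permutes)
  have "f ` {..<N} = {..<N}" by (rule endo_inj_surj) (use assms in auto)
  then show "bij_betw f {..<N} {..<N}" using assms(2) by (simp add: bij_betw_def)
next
  fix x assume "x \<notin> {..<N}" then show "f x = x" using assms(3) by auto
qed

lemma perm_restrict:
  fixes \<sigma> :: "nat \<Rightarrow> nat" and N L s t :: nat
  assumes s: "\<sigma> permutes {..<N}" and r: "\<forall>i<L. s + i < N \<and> t \<le> \<sigma> (s+i) \<and> \<sigma> (s+i) < t + L"
  shows "(\<lambda>i. if i<L then \<sigma> (s+i) - t else i) permutes {..<L}"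
proof (rule permutes_by_inj)
  show "\<forall>i<L. (if i<L then \<sigma> (s+i) - t else i) < L" using r by force
  show "inj_on (\<lambda>i. if i<L then \<sigma> (s+i) - t else i) {..<L}"
  proof (rule inj_onI)
    fix x y assume x: "x \<in> {..<L}" and y: "y \<in> {..<L}" and e: "(if x<L then \<sigma> (s+x) - t else x) = (if y<L then \<sigma> (s+y) - t else y)"
    have t1: "t \<le> \<sigma> (s+x)" "t \<le> \<sigma> (s+y)" using r x y by auto
    have "\<sigma> (s+x) - t = \<sigma> (s+y) - t" using e x y by simp
    then have "\<sigma> (s+x) = \<sigma> (s+y)" using t1 by arith
    then have "s + x = s + y" using permutes_inj[OF s] by (simp add: inj_eq)
    then show "x = y" by simp
  qed
qed auto

lemma perm3:
  fixes f g h :: "nat \<Rightarrow> nat" and a b c :: nat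
  assumes f: "f permutes {..<a}" and g: "g permutes {..<b}" and h: "h permutes {..<c}"
  shows "(\<lambda>i. if i<a then f i else if i<a+b then a + g (i-a) else if i<a+b+c then a+b+h(i-a-b) else i) permutes {..<a+b+c}"
proof (rule permutes_by_inj)
  have fl: "\<forall>i<a. f i < a" using perm_lt[OF f] by blast
  have gl: "\<forall>i<b. g i < b" using perm_lt[OF g] by blast
  have hl: "\<forall>i<c. h i < c" using perm_lt[OF h] by blast
  have fi: "\<And>x y. f x = f y \<Longrightarrow> x = y" using permutes_inj[OF f] by (simp add: inj_eq)
  have gi: "\<And>x y. g x = g y \<Longrightarrow> x = y" using permutes_inj[OF g] by (simp add: inj_eq)
  have hi: "\<And>x y. h x = h y \<Longrightarrow> x = y" using permutes_inj[OF h] by (simp add: inj_eq)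
  have gl': "\<forall>i. a \<le> i \<longrightarrow> i < a+b \<longrightarrow> g (i-a) < b" using gl by auto
  have hl': "\<forall>i. a+b \<le> i \<longrightarrow> i < a+b+c \<longrightarrow> h (i-a-b) < c" using hl by auto
  show "\<forall>i<a+b+c. (if i<a then f i else if i<a+b then a + g (i-a) else if i<a+b+c then a+b+h(i-a-b) else i) < a+b+c"
  proof (intro allI impI)
    fix i assume i: "i < a+b+c"
    consider "i<a" | "a \<le> i" "i<a+b" | "a+b \<le> i" by linarith
    then show "(if i<a then f i else if i<a+b then a + g (i-a) else if i<a+b+c then a+b+h(i-a-b) else i) < a+b+c"
    proof cases
      case 1 then show ?thesis using fl by auto
    next
      case 2 then show ?thesis using gl'[rule_format, of i] by auto
    next
      case 3 then show ?thesis using hl'[rule_format, of i] i by auto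
    qed
  qed
  show "inj_on (\<lambda>i. if i<a then f i else if i<a+b then a + g (i-a) else if i<a+b+c then a+b+h(i-a-b) else i) {..<a+b+c}"
  proof (rule inj_onI)
    fix x y assume x: "x \<in> {..<a+b+c}" and y: "y \<in> {..<a+b+c}"
      and e: "(if x<a then f x else if x<a+b then a + g (x-a) else if x<a+b+c then a+b+h(x-a-b) else x) =
              (if y<a then f y else if y<a+b then a + g (y-a) else if y<a+b+c then a+b+h(y-a-b) else y)"
    have gx: "x<a+b \<Longrightarrow> \<not> x<a \<Longrightarrow> g (x-a) < b" using gl by auto
    have gy: "y<a+b \<Longrightarrow> \<not> y<a \<Longrightarrow> g (y-a) < b" using gl by auto
    have hx: "\<not> x<a+b \<Longrightarrow> h (x-a-b) < c" using hl x by auto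
    have hy: "\<not> y<a+b \<Longrightarrow> h (y-a-b) < c" using hl y by auto
    show "x = y"
      using e x y fl gx gy hx hy fi[of x y] gi[of "x-a" "y-a"] hi[of "x-a-b" "y-a-b"]
      by (auto split: if_splits)
  qed
qed auto

lemma perm3swap:
  fixes f g h :: "nat \<Rightarrow> nat" and a c :: nat
  assumes f: "f permutes {..<a}" and g: "g permutes {..<a}" and h: "h permutes {..<c}"
  shows "(\<lambda>i. if i<a then a + g i else if i<2*a then f (i-a) else if i<2*a+c then 2*a+h(i-2*a) else i) permutes {..<2*a+c}"
proof (rule permutes_by_inj)
  have fl: "\<forall>i<a. f i < a" using perm_lt[OF f] by blast
  have gl: "\<forall>i<a. g i < a" using perm_lt[OF g] by blast
  have hl: "\<forall>i<c. h i < c" using perm_lt[OF h] by blast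
  have fi: "\<And>x y. f x = f y \<Longrightarrow> x = y" using permutes_inj[OF f] by (simp add: inj_eq)
  have gi: "\<And>x y. g x = g y \<Longrightarrow> x = y" using permutes_inj[OF g] by (simp add: inj_eq)
  have hi: "\<And>x y. h x = h y \<Longrightarrow> x = y" using permutes_inj[OF h] by (simp add: inj_eq)
  have fl': "\<forall>i. a \<le> i \<longrightarrow> i < 2*a \<longrightarrow> f (i-a) < a" using fl by auto
  have hl': "\<forall>i. 2*a \<le> i \<longrightarrow> i < 2*a+c \<longrightarrow> h (i-2*a) < c" using hl by auto
  show "\<forall>i<2*a+c. (if i<a then a + g i else if i<2*a then f (i-a) else if i<2*a+c then 2*a+h(i-2*a) else i) < 2*a+c"
  proof (intro allI impI)
    fix i assume i: "i < 2*a+c"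
    consider "i<a" | "a \<le> i" "i<2*a" | "2*a \<le> i" by linarith
    then show "(if i<a then a + g i else if i<2*a then f (i-a) else if i<2*a+c then 2*a+h(i-2*a) else i) < 2*a+c"
    proof cases
      case 1 then show ?thesis using gl by auto
    next
      case 2 then show ?thesis using fl'[rule_format, of i] by auto
    next
      case 3 then show ?thesis using hl'[rule_format, of i] i by auto
    qed
  qed
  show "inj_on (\<lambda>i. if i<a then a + g i else if i<2*a then f (i-a) else if i<2*a+c then 2*a+h(i-2*a) else i) {..<2*a+c}"
  proof (rule inj_onI)
    fix x y assume x: "x \<in> {..<2*a+c}" and y: "y \<in> {..<2*a+c}"
      and e: "(if x<a then a + g x else if x<2*a then f (x-a) else if x<2*a+c then 2*a+h(x-2*a) else x) =
              (if y<a then a + g y else if y<2*a then f (y-a) else if y<2*a+c then 2*a+h(y-2*a) else y)"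
    have fx: "x<2*a \<Longrightarrow> \<not> x<a \<Longrightarrow> f (x-a) < a" using fl by auto
    have fy: "y<2*a \<Longrightarrow> \<not> y<a \<Longrightarrow> f (y-a) < a" using fl by auto
    have hx: "\<not> x<2*a \<Longrightarrow> h (x-2*a) < c" using hl x by auto
    have hy: "\<not> y<2*a \<Longrightarrow> h (y-2*a) < c" using hl y by auto
    show "x = y"
      using e x y gl fx fy hx hy gi[of x y] fi[of "x-a" "y-a"] hi[of "x-2*a" "y-2*a"]
      by (auto split: if_splits)
  qed
qed auto



definition Aent :: "nat \<Rightarrow> nat \<Rightarrow> int mat \<Rightarrow> int mat \<Rightarrow> int mat \<Rightarrow> int mat \<Rightarrow> int mat \<Rightarrow> nat \<Rightarrow> nat \<Rightarrow> int" where
"Aent k1 k2 X1 X2 X3 X4 Y i j = (if i<k1 then (if j<k2 then 0 else if j<2*k2 then 1 else X1$$(i, j-2*k2))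
   else if i<2*k1 then (if j<k2 then 1 else if j<2*k2 then 0 else X2$$(i-k1, j-2*k2))
   else (if j<k2 then X3$$(i-2*k1, j) else if j<2*k2 then X4$$(i-2*k1, j-k2) else Y$$(i-2*k1, j-2*k2)))"

definition Bent :: "nat \<Rightarrow> nat \<Rightarrow> int mat \<Rightarrow> int mat \<Rightarrow> int mat \<Rightarrow> int mat \<Rightarrow> int mat \<Rightarrow> nat \<Rightarrow> nat \<Rightarrow> int" where
"Bent k1 k2 X1 X2 X3 X4 Y i j = (if i<k1 then (if j<k2 then 1 else if j<2*k2 then 0 else X1$$(i, j-2*k2))
   else if i<2*k1 then (if j<k2 then 0 else if j<2*k2 then 1 else X2$$(i-k1, j-2*k2))
   else (if j<k2 then X3$$(i-2*k1, j) else if j<2*k2 then X4$$(i-2*k1, j-k2) else Y$$(i-2*k1, j-2*k2)))"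

lemma A_entry:
  assumes X1: "X1 \<in> carrier_mat k1 n" and X3: "X3 \<in> carrier_mat m k2"
  shows "block3 (0\<^sub>m k1 k2) (all_ones_mat k1 k2) X1 (all_ones_mat k1 k2) (0\<^sub>m k1 k2) X2 X3 X4 Y
     = mat (2*k1+m) (2*k2+n) (\<lambda>(i,j). Aent k1 k2 X1 X2 X3 X4 Y i j)"
  using X1 X3 unfolding block3_def Let_def Aent_def all_ones_mat_def
  by (intro eq_matI) (auto simp: diff_diff_left mult_2)

lemma B_entry:
  assumes X1: "X1 \<in> carrier_mat k1 n" and X3: "X3 \<in> carrier_mat m k2"
  shows "block3 (all_ones_mat k1 k2) (0\<^sub>m k1 k2) X1 (0\<^sub>m k1 k2) (all_ones_mat k1 k2) X2 X3 X4 Y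
     = mat (2*k1+m) (2*k2+n) (\<lambda>(i,j). Bent k1 k2 X1 X2 X3 X4 Y i j)"
  using X1 X3 unfolding block3_def Let_def Bent_def all_ones_mat_def
  by (intro eq_matI) (auto simp: diff_diff_left mult_2)

lemma gram_row:
  assumes "zero_one_mat M" "i < dim_row M"
  shows "(M * transpose_mat M) $$ (i,i) = row_sum M i"
proof -
  have "(M * transpose_mat M) $$ (i,i) = (\<Sum>l\<in>{0..<dim_col M}. M $$ (i,l) * M $$ (i,l))"
    using assms(2) by (simp add: scalar_prod_def)
  also have "\<dots> = (\<Sum>l\<in>{0..<dim_col M}. M $$ (i,l))"
  proof (rule sum.cong)
    fix l assume "l \<in> {0..<dim_col M}"
    then have "M $$ (i,l) \<in> {0,1}" using assms unfolding zero_one_mat_def by auto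
    then show "M $$ (i,l) * M $$ (i,l) = M $$ (i,l)" by auto
  qed simp
  finally show ?thesis unfolding row_sum_def by (simp add: atLeast0LessThan)
qed

lemma gram_col:
  assumes "zero_one_mat M" "j < dim_col M"
  shows "(transpose_mat M * M) $$ (j,j) = col_sum M j"
proof -
  have "(transpose_mat M * M) $$ (j,j) = (\<Sum>l\<in>{0..<dim_row M}. M $$ (l,j) * M $$ (l,j))"
    using assms(2) by (simp add: scalar_prod_def)
  also have "\<dots> = (\<Sum>l\<in>{0..<dim_row M}. M $$ (l,j))"
  proof (rule sum.cong)
    fix l assume "l \<in> {0..<dim_row M}"
    then have "M $$ (l,j) \<in> {0,1}" using assms unfolding zero_one_mat_def by auto
    then show "M $$ (l,j) * M $$ (l,j) = M $$ (l,j)" by auto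
  qed simp
  finally show ?thesis unfolding col_sum_def by (simp add: atLeast0LessThan)
qed

lemma iso_char:
  assumes A: "A \<in> carrier_mat r c" and B: "B \<in> carrier_mat r c"
  shows "isomorphic_mat A B \<longleftrightarrow> (\<exists>\<sigma> \<tau>. \<sigma> permutes {..<r} \<and> \<tau> permutes {..<c} \<and>
            (\<forall>i<r. \<forall>j<c. B $$ (i,j) = A $$ (\<sigma> i, \<tau> j)))"
proof
  assume "isomorphic_mat A B"
  then obtain P Q where P: "perm_mat r P" and Q: "perm_mat c Q" and e: "B = P * A * Q"
    unfolding isomorphic_mat_def using A by auto
  obtain p where p: "p permutes {..<r}" and Pp: "P = pmat r p" using perm_mat_obtain[OF P] by blast
  obtain q where q: "q permutes {..<c}" and Qq: "Q = pmat c q" using perm_mat_obtain[OF Q] by blast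
  have "\<forall>i<r. \<forall>j<c. B $$ (i,j) = A $$ (p i, iv q j)"
    using iffD1[OF pm_eq[OF A B p q] e[unfolded Pp Qq]] .
  then show "\<exists>\<sigma> \<tau>. \<sigma> permutes {..<r} \<and> \<tau> permutes {..<c} \<and>
            (\<forall>i<r. \<forall>j<c. B $$ (i,j) = A $$ (\<sigma> i, \<tau> j))"
    using p permutes_inv[OF q] by blast
next
  assume "\<exists>\<sigma> \<tau>. \<sigma> permutes {..<r} \<and> \<tau> permutes {..<c} \<and>
            (\<forall>i<r. \<forall>j<c. B $$ (i,j) = A $$ (\<sigma> i, \<tau> j))"
  then obtain p q where p: "p permutes {..<r}" and q: "q permutes {..<c}"
    and e: "\<forall>i<r. \<forall>j<c. B $$ (i,j) = A $$ (p i, q j)" by blast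
  have qi: "iv q permutes {..<c}" using permutes_inv[OF q] .
  have "B = pmat r p * A * pmat c (iv q)"
    by (rule iffD2[OF pm_eq[OF A B p qi]]) (unfold permutes_inv_inv[OF q], rule e)
  then show "isomorphic_mat A B" unfolding isomorphic_mat_def using A p qi perm_mat_pmat by auto
qed



theorem proposition6p5:
  fixes k1 k2 m n :: nat and X1 X2 X3 X4 Y A B :: "int mat"
  assumes k1: "k1 > 0" and k2: "k2 > 0"
    and X1: "X1 \<in> carrier_mat k1 n" and X2: "X2 \<in> carrier_mat k1 n"
    and X3: "X3 \<in> carrier_mat m k2" and X4: "X4 \<in> carrier_mat m k2"
    and Y: "Y \<in> carrier_mat m n"
    and zo: "zero_one_mat X1" "zero_one_mat X2" "zero_one_mat X3" "zero_one_mat X4"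
            "zero_one_mat Y"
    and A_def: "A = block3 (0\<^sub>m k1 k2) (all_ones_mat k1 k2) X1
                          (all_ones_mat k1 k2) (0\<^sub>m k1 k2) X2
                          X3 X4 Y"
    and B_def: "B = block3 (all_ones_mat k1 k2) (0\<^sub>m k1 k2) X1
                          (0\<^sub>m k1 k2) (all_ones_mat k1 k2) X2
                          X3 X4 Y"
    and gm: "gram_mates A B"
    and colsums: "\<forall>j < n. col_sum X1 j = col_sum X2 j"
    and rowsums: "\<forall>i < m. row_sum X3 i = row_sum X4 i"
    and R_disj: "row_sum A ` {..<k1} \<inter> row_sum A ` {2*k1..<2*k1+m} = {}"
                "row_sum A ` {k1..<2*k1} \<inter> row_sum A ` {2*k1..<2*k1+m} = {}"
    and S_disj: "col_sum A ` {..<k2} \<inter> col_sum A ` {2*k2..<2*k2+n} = {}"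
                "col_sum A ` {k2..<2*k2} \<inter> col_sum A ` {2*k2..<2*k2+n} = {}"
  shows "isomorphic_mat A B \<longleftrightarrow> fixable X1 X2 X3 X4 Y"
proof -
  define N where "N = 2*k1+m"
  define M where "M = 2*k2+n"
  define AE where "AE = Aent k1 k2 X1 X2 X3 X4 Y"
  define BE where "BE = Bent k1 k2 X1 X2 X3 X4 Y"
  have Aeq: "A = mat N M (\<lambda>(i,j). AE i j)" using A_def A_entry[OF X1 X3] N_def M_def AE_def by simp
  have Beq: "B = mat N M (\<lambda>(i,j). BE i j)" using B_def B_entry[OF X1 X3] N_def M_def BE_def by simp
  have AC: "A \<in> carrier_mat N M" and BC: "B \<in> carrier_mat N M" using Aeq Beq by auto
  have Ai: "\<And>i j. i<N \<Longrightarrow> j<M \<Longrightarrow> A$$(i,j) = AE i j" using Aeq by simp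
  have Bi: "\<And>i j. i<N \<Longrightarrow> j<M \<Longrightarrow> B$$(i,j) = BE i j" using Beq by simp
  have dX: "dim_row X1 = k1" "dim_col X1 = n" "dim_row X2 = k1" "dim_col X2 = n"
     "dim_row X3 = m" "dim_col X3 = k2" "dim_row X4 = m" "dim_col X4 = k2" "dim_row Y = m" "dim_col Y = n"
    using X1 X2 X3 X4 Y by auto
  show ?thesis
  proof
    assume iso: "isomorphic_mat A B"
    then obtain \<sigma> \<tau> where \<sigma>: "\<sigma> permutes {..<N}" and \<tau>: "\<tau> permutes {..<M}"
      and H: "\<forall>i<N. \<forall>j<M. B$$(i,j) = A$$(\<sigma> i, \<tau> j)" using iso_char[OF AC BC] by blast
    have H': "\<And>i j. i<N \<Longrightarrow> j<M \<Longrightarrow> BE i j = AE (\<sigma> i) (\<tau> j)"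
      using H Ai Bi perm_lt[OF \<sigma>] perm_lt[OF \<tau>] by metis
    have rsB: "row_sum B i = row_sum A (\<sigma> i)" if i: "i<N" for i
    proof -
      have "row_sum B i = (\<Sum>j<M. A$$(\<sigma> i, \<tau> j))" unfolding row_sum_def using BC H i by simp
      also have "\<dots> = (\<Sum>j<M. A$$(\<sigma> i, j))"
        using sum.permute[OF \<tau>, of "\<lambda>j. A$$(\<sigma> i, j)"] by (simp add: comp_def)
      finally show ?thesis unfolding row_sum_def using AC by simp
    qed
    have csB: "col_sum B j = col_sum A (\<tau> j)" if j: "j<M" for j
    proof -
      have "col_sum B j = (\<Sum>i<N. A$$(\<sigma> i, \<tau> j))" unfolding col_sum_def using BC H j by simp
      also have "\<dots> = (\<Sum>i<N. A$$(i, \<tau> j))"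
        using sum.permute[OF \<sigma>, of "\<lambda>i. A$$(i, \<tau> j)"] by (simp add: comp_def)
      finally show ?thesis unfolding col_sum_def using AC by simp
    qed
    have zA: "zero_one_mat A" and zB: "zero_one_mat B" and g1: "A * transpose_mat A = B * transpose_mat B"
      and g2: "transpose_mat A * A = transpose_mat B * B" using gm unfolding gram_mates_def by auto
    have rsAB: "row_sum A i = row_sum B i" if "i<N" for i
      using gram_row[OF zA, of i] gram_row[OF zB, of i] g1 AC BC that by simp
    have csAB: "col_sum A j = col_sum B j" if "j<M" for j
      using gram_col[OF zA, of j] gram_col[OF zB, of j] g2 AC BC that by simp
    have rs: "row_sum A (\<sigma> i) = row_sum A i" if "i<N" for i using rsB rsAB that by simp
    have cs: "col_sum A (\<tau> j) = col_sum A j" if "j<M" for j using csB csAB that by simp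
    have sN: "\<sigma> i < N" if "i<N" for i using perm_lt[OF \<sigma> that] .
    have tM: "\<tau> j < M" if "j<M" for j using perm_lt[OF \<tau> that] .
    have s3: "2*k1 \<le> \<sigma> i" if "2*k1 \<le> i" "i < N" for i
    proof (rule ccontr)
      assume "\<not> 2*k1 \<le> \<sigma> i"
      moreover have m3: "row_sum A (\<sigma> i) \<in> row_sum A ` {2*k1..<2*k1+m}" using rs[of i] that N_def by auto
      ultimately show False
      proof (cases "\<sigma> i < k1")
        case True then have "row_sum A (\<sigma> i) \<in> row_sum A ` {..<k1}" by auto
        then show False using m3 R_disj(1) by blast
      next
        case False then have "row_sum A (\<sigma> i) \<in> row_sum A ` {k1..<2*k1}" using \<open>\<not> 2*k1 \<le> \<sigma> i\<close> by auto
        then show False using m3 R_disj(2) by blast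
      qed
    qed
    have s12: "\<sigma> i < 2*k1" if "i < 2*k1" for i
    proof (rule ccontr)
      assume "\<not> \<sigma> i < 2*k1"
      have iN: "i<N" using that N_def by simp
      have "\<sigma> i \<in> {2*k1..<2*k1+m}" using sN[OF iN] \<open>\<not> \<sigma> i < 2*k1\<close> N_def by simp
      then have m3: "row_sum A i \<in> row_sum A ` {2*k1..<2*k1+m}" using rs[OF iN] by (metis image_eqI)
      show False
      proof (cases "i < k1")
        case True then have "row_sum A i \<in> row_sum A ` {..<k1}" by auto
        then show False using m3 R_disj(1) by blast
      next
        case False then have "row_sum A i \<in> row_sum A ` {k1..<2*k1}" using that by auto
        then show False using m3 R_disj(2) by blast
      qed
    qed
    have t3: "2*k2 \<le> \<tau> j" if "2*k2 \<le> j" "j < M" for j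
    proof (rule ccontr)
      assume "\<not> 2*k2 \<le> \<tau> j"
      moreover have m3: "col_sum A (\<tau> j) \<in> col_sum A ` {2*k2..<2*k2+n}" using cs[of j] that M_def by auto
      ultimately show False
      proof (cases "\<tau> j < k2")
        case True then have "col_sum A (\<tau> j) \<in> col_sum A ` {..<k2}" by auto
        then show False using m3 S_disj(1) by blast
      next
        case False then have "col_sum A (\<tau> j) \<in> col_sum A ` {k2..<2*k2}" using \<open>\<not> 2*k2 \<le> \<tau> j\<close> by auto
        then show False using m3 S_disj(2) by blast
      qed
    qed
    have t12: "\<tau> j < 2*k2" if "j < 2*k2" for j
    proof (rule ccontr)
      assume "\<not> \<tau> j < 2*k2"
      have iN: "j<M" using that M_def by simp
      have "\<tau> j \<in> {2*k2..<2*k2+n}" using tM[OF iN] \<open>\<not> \<tau> j < 2*k2\<close> M_def by simp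
      then have m3: "col_sum A j \<in> col_sum A ` {2*k2..<2*k2+n}" using cs[OF iN] by (metis image_eqI)
      show False
      proof (cases "j < k2")
        case True then have "col_sum A j \<in> col_sum A ` {..<k2}" by auto
        then show False using m3 S_disj(1) by blast
      next
        case False then have "col_sum A j \<in> col_sum A ` {k2..<2*k2}" using that by auto
        then show False using m3 S_disj(2) by blast
      qed
    qed
    have TL: "((\<sigma> i < k1) = (\<tau> j < k2)) = ((i<k1) \<noteq> (j<k2))" if "i<2*k1" "j<2*k2" for i j
      using H'[of i j] s12[of i] t12[of j] that N_def M_def
      by (auto simp: AE_def BE_def Aent_def Bent_def split: if_splits)
    have HE: "BE i j = AE (\<sigma> i) (\<tau> j)" if "i<N" "j<M" for i j using H'[OF that] .
    define p where "p = (\<lambda>i. if i<m then \<sigma> (2*k1+i) - 2*k1 else i)"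
    define q where "q = (\<lambda>j. if j<n then \<tau> (2*k2+j) - 2*k2 else j)"
    have pP: "p permutes {..<m}" unfolding p_def
      by (rule perm_restrict[OF \<sigma>]) (use s3 sN N_def in \<open>auto simp: mult_2\<close>)
    have qP: "q permutes {..<n}" unfolding q_def
      by (rule perm_restrict[OF \<tau>]) (use t3 tM M_def in \<open>auto simp: mult_2\<close>)
    have pv: "p i = \<sigma> (2*k1+i) - 2*k1" if "i<m" for i using that p_def by simp
    have qv: "q j = \<tau> (2*k2+j) - 2*k2" if "j<n" for j using that q_def by simp
    have a1: "2*k1 \<le> \<sigma> (2*k1+i)" if "i<m" for i using s3[of "2*k1+i"] that N_def by simp
    have a2: "2*k2 \<le> \<tau> (2*k2+j)" if "j<n" for j using t3[of "2*k2+j"] that M_def by simp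
    have Yeq: "\<forall>i<m. \<forall>j<n. Y$$(i,j) = Y$$(p i, q j)"
    proof (intro allI impI)
      fix i j assume i: "i<m" and j: "j<n"
      show "Y$$(i,j) = Y$$(p i, q j)"
        using HE[of "2*k1+i" "2*k2+j"] i j a1[OF i] a2[OF j] pv[OF i] qv[OF j] N_def M_def
        by (simp add: AE_def BE_def Aent_def Bent_def)
    qed
    have fF: "fixF k1 k2 m n X1 X2 X3 X4 Y"
    proof (cases "\<sigma> 0 < k1")
      case False
      have r1: "k1 \<le> \<sigma> i" if "i<k1" for i using TL[of i 0] TL[of 0 0] that k1 k2 False by auto
      have r2: "\<sigma> i < k1" if "k1 \<le> i" "i<2*k1" for i using TL[of i 0] TL[of 0 0] that k1 k2 False by auto
      have c1: "\<tau> j < k2" if "j<k2" for j using TL[of 0 j] that k1 k2 False by auto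
      have c2: "k2 \<le> \<tau> j" if "k2 \<le> j" "j<2*k2" for j using TL[of 0 j] that k1 k2 False by auto
      define a where "a = (\<lambda>i. if i<k1 then \<sigma> (k1+i) - 0 else i)"
      define b where "b = (\<lambda>i. if i<k1 then \<sigma> (0+i) - k1 else i)"
      define c where "c = (\<lambda>i. if i<k2 then \<tau> (0+i) - 0 else i)"
      define d where "d = (\<lambda>i. if i<k2 then \<tau> (k2+i) - k2 else i)"
      have aP: "a permutes {..<k1}" unfolding a_def
        by (rule perm_restrict[OF \<sigma>]) (use r2 N_def in \<open>auto simp: mult_2\<close>)
      have bP: "b permutes {..<k1}" unfolding b_def
        by (rule perm_restrict[OF \<sigma>]) (use r1 s12 N_def in \<open>auto simp: mult_2\<close>)
      have cP: "c permutes {..<k2}" unfolding c_def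
        by (rule perm_restrict[OF \<tau>]) (use c1 M_def in \<open>auto simp: mult_2\<close>)
      have dP: "d permutes {..<k2}" unfolding d_def
        by (rule perm_restrict[OF \<tau>]) (use c2 t12 M_def in \<open>auto simp: mult_2\<close>)
      have e12: "\<forall>i<k1. \<forall>j<n. X2$$(i,j) = X1$$(a i, q j) \<and> X1$$(i,j) = X2$$(b i, q j)"
      proof (intro allI impI)
        fix i j assume i: "i<k1" and j: "j<n"
        have u1: "\<sigma> (k1+i) < k1" using r2[of "k1+i"] i by simp
        have u2: "k1 \<le> \<sigma> i" "\<sigma> i < 2*k1" using r1[of i] s12[of i] i by auto
        have "X2$$(i,j) = X1$$(\<sigma> (k1+i), \<tau> (2*k2+j) - 2*k2)"
          using HE[of "k1+i" "2*k2+j"] i j a2[OF j] u1 N_def M_def by (simp add: AE_def BE_def Aent_def Bent_def)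
        moreover have "X1$$(i,j) = X2$$(\<sigma> i - k1, \<tau> (2*k2+j) - 2*k2)"
          using HE[of "i" "2*k2+j"] i j a2[OF j] u2 N_def M_def by (simp add: AE_def BE_def Aent_def Bent_def)
        ultimately show "X2$$(i,j) = X1$$(a i, q j) \<and> X1$$(i,j) = X2$$(b i, q j)"
          using i j qv[OF j] by (simp add: a_def b_def)
      qed
      have e34: "\<forall>i<m. \<forall>j<k2. X3$$(i,j) = X3$$(p i, c j) \<and> X4$$(i,j) = X4$$(p i, d j)"
      proof (intro allI impI)
        fix i j assume i: "i<m" and j: "j<k2"
        have u1: "\<tau> j < k2" using c1 j by simp
        have u2: "k2 \<le> \<tau> (k2+j)" "\<tau> (k2+j) < 2*k2" using c2[of "k2+j"] t12[of "k2+j"] j by auto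
        have "X3$$(i,j) = X3$$(\<sigma> (2*k1+i) - 2*k1, \<tau> j)"
          using HE[of "2*k1+i" "j"] i j a1[OF i] u1 N_def M_def by (simp add: AE_def BE_def Aent_def Bent_def)
        moreover have "X4$$(i,j) = X4$$(\<sigma> (2*k1+i) - 2*k1, \<tau> (k2+j) - k2)"
          using HE[of "2*k1+i" "k2+j"] i j a1[OF i] u2 N_def M_def by (simp add: AE_def BE_def Aent_def Bent_def)
        ultimately show "X3$$(i,j) = X3$$(p i, c j) \<and> X4$$(i,j) = X4$$(p i, d j)"
          using i j pv[OF i] by (simp add: c_def d_def)
      qed
      show ?thesis unfolding fixF_def
        apply (rule exI[of _ p], rule exI[of _ q])
        apply (intro conjI pP qP Yeq)
        apply (rule disjI1)
        apply (rule exI[of _ a], rule exI[of _ b], rule exI[of _ c], rule exI[of _ d])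
        apply (intro conjI aP bP cP dP e12 e34)
        done
    next
      case True
      have r1: "\<sigma> i < k1" if "i<k1" for i using TL[of i 0] TL[of 0 0] that k1 k2 True by auto
      have r2: "k1 \<le> \<sigma> i" if "k1 \<le> i" "i<2*k1" for i using TL[of i 0] TL[of 0 0] that k1 k2 True by auto
      have c1: "k2 \<le> \<tau> j" if "j<k2" for j using TL[of 0 j] that k1 k2 True by auto
      have c2: "\<tau> j < k2" if "k2 \<le> j" "j<2*k2" for j using TL[of 0 j] that k1 k2 True by auto
      define a where "a = (\<lambda>i. if i<k1 then \<sigma> (0+i) - 0 else i)"
      define b where "b = (\<lambda>i. if i<k1 then \<sigma> (k1+i) - k1 else i)"
      define c where "c = (\<lambda>i. if i<k2 then \<tau> (k2+i) - 0 else i)"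
      define d where "d = (\<lambda>i. if i<k2 then \<tau> (0+i) - k2 else i)"
      have aP: "a permutes {..<k1}" unfolding a_def
        by (rule perm_restrict[OF \<sigma>]) (use r1 N_def in \<open>auto simp: mult_2\<close>)
      have bP: "b permutes {..<k1}" unfolding b_def
        by (rule perm_restrict[OF \<sigma>]) (use r2 s12 N_def in \<open>auto simp: mult_2\<close>)
      have cP: "c permutes {..<k2}" unfolding c_def
        by (rule perm_restrict[OF \<tau>]) (use c2 M_def in \<open>auto simp: mult_2\<close>)
      have dP: "d permutes {..<k2}" unfolding d_def
        by (rule perm_restrict[OF \<tau>]) (use c1 t12 M_def in \<open>auto simp: mult_2\<close>)
      have e12: "\<forall>i<k1. \<forall>j<n. X1$$(i,j) = X1$$(a i, q j) \<and> X2$$(i,j) = X2$$(b i, q j)"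
      proof (intro allI impI)
        fix i j assume i: "i<k1" and j: "j<n"
        have u1: "\<sigma> i < k1" using r1[of i] i by simp
        have u2: "k1 \<le> \<sigma> (k1+i)" "\<sigma> (k1+i) < 2*k1" using r2[of "k1+i"] s12[of "k1+i"] i by auto
        have "X1$$(i,j) = X1$$(\<sigma> i, \<tau> (2*k2+j) - 2*k2)"
          using HE[of "i" "2*k2+j"] i j a2[OF j] u1 N_def M_def by (simp add: AE_def BE_def Aent_def Bent_def)
        moreover have "X2$$(i,j) = X2$$(\<sigma> (k1+i) - k1, \<tau> (2*k2+j) - 2*k2)"
          using HE[of "k1+i" "2*k2+j"] i j a2[OF j] u2 N_def M_def by (simp add: AE_def BE_def Aent_def Bent_def)
        ultimately show "X1$$(i,j) = X1$$(a i, q j) \<and> X2$$(i,j) = X2$$(b i, q j)"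
          using i j qv[OF j] by (simp add: a_def b_def)
      qed
      have e34: "\<forall>i<m. \<forall>j<k2. X4$$(i,j) = X3$$(p i, c j) \<and> X3$$(i,j) = X4$$(p i, d j)"
      proof (intro allI impI)
        fix i j assume i: "i<m" and j: "j<k2"
        have u1: "\<tau> (k2+j) < k2" using c2[of "k2+j"] j by simp
        have u2: "k2 \<le> \<tau> j" "\<tau> j < 2*k2" using c1[of j] t12[of j] j by auto
        have "X4$$(i,j) = X3$$(\<sigma> (2*k1+i) - 2*k1, \<tau> (k2+j))"
          using HE[of "2*k1+i" "k2+j"] i j a1[OF i] u1 N_def M_def by (simp add: AE_def BE_def Aent_def Bent_def)
        moreover have "X3$$(i,j) = X4$$(\<sigma> (2*k1+i) - 2*k1, \<tau> j - k2)"
          using HE[of "2*k1+i" "j"] i j a1[OF i] u2 N_def M_def by (simp add: AE_def BE_def Aent_def Bent_def)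
        ultimately show "X4$$(i,j) = X3$$(p i, c j) \<and> X3$$(i,j) = X4$$(p i, d j)"
          using i j pv[OF i] by (simp add: c_def d_def)
      qed
      show ?thesis unfolding fixF_def
        apply (rule exI[of _ p], rule exI[of _ q])
        apply (intro conjI pP qP Yeq)
        apply (rule disjI2)
        apply (rule exI[of _ a], rule exI[of _ b], rule exI[of _ c], rule exI[of _ d])
        apply (intro conjI aP bP cP dP e12 e34)
        done
    qed
    show "fixable X1 X2 X3 X4 Y" by (rule fixF_imp_fixable[OF X1 X2 X3 X4 Y fF])
  next
    assume "fixable X1 X2 X3 X4 Y"
    then have "fixF k1 k2 m n X1 X2 X3 X4 Y" by (rule fixable_imp_fixF[OF X1 X2 X3 X4 Y])
    then obtain p q where pP: "p permutes {..<m}" and qP: "q permutes {..<n}"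
      and Yeq: "\<forall>i<m. \<forall>j<n. Y$$(i,j) = Y$$(p i, q j)"
      and cases: "(\<exists>a b c d. a permutes {..<k1} \<and> b permutes {..<k1} \<and> c permutes {..<k2} \<and> d permutes {..<k2} \<and>
   (\<forall>i<k1. \<forall>j<n. X2$$(i,j) = X1$$(a i, q j) \<and> X1$$(i,j) = X2$$(b i, q j)) \<and>
   (\<forall>i<m. \<forall>j<k2. X3$$(i,j) = X3$$(p i, c j) \<and> X4$$(i,j) = X4$$(p i, d j))) \<or>
  (\<exists>a b c d. a permutes {..<k1} \<and> b permutes {..<k1} \<and> c permutes {..<k2} \<and> d permutes {..<k2} \<and>
   (\<forall>i<k1. \<forall>j<n. X1$$(i,j) = X1$$(a i, q j) \<and> X2$$(i,j) = X2$$(b i, q j)) \<and>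
   (\<forall>i<m. \<forall>j<k2. X4$$(i,j) = X3$$(p i, c j) \<and> X3$$(i,j) = X4$$(p i, d j)))"
      unfolding fixF_def by blast
    have pl: "p i < m" if "i<m" for i using perm_lt[OF pP that] .
    have ql: "q i < n" if "i<n" for i using perm_lt[OF qP that] .
    have fin: "\<exists>s t. s permutes {..<N} \<and> t permutes {..<M} \<and> (\<forall>i<N. \<forall>j<M. BE i j = AE (s i) (t j))"
      using cases
    proof (elim disjE exE conjE)
      fix a b c d assume aP: "a permutes {..<k1}" and bP: "b permutes {..<k1}" and cP: "c permutes {..<k2}" and dP: "d permutes {..<k2}"
        and e12: "\<forall>i<k1. \<forall>j<n. X2$$(i,j) = X1$$(a i, q j) \<and> X1$$(i,j) = X2$$(b i, q j)"
        and e34: "\<forall>i<m. \<forall>j<k2. X3$$(i,j) = X3$$(p i, c j) \<and> X4$$(i,j) = X4$$(p i, d j)"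
      have al: "a i < k1" if "i<k1" for i using perm_lt[OF aP that] .
      have bl: "b i < k1" if "i<k1" for i using perm_lt[OF bP that] .
      have cl: "c i < k2" if "i<k2" for i using perm_lt[OF cP that] .
      have dl: "d i < k2" if "i<k2" for i using perm_lt[OF dP that] .
      define s where "s = (\<lambda>i. if i<k1 then k1 + b i else if i<2*k1 then a (i-k1) else if i<2*k1+m then 2*k1+p(i-2*k1) else i)"
      define t where "t = (\<lambda>j. if j<k2 then c j else if j<2*k2 then k2 + d (j-k2) else if j<2*k2+n then 2*k2+q(j-2*k2) else j)"
      have sP: "s permutes {..<N}" unfolding s_def N_def by (rule perm3swap[OF aP bP pP])
      have t_alt: "t = (\<lambda>j. if j<k2 then c j else if j<k2+k2 then k2 + d (j-k2) else if j<k2+k2+n then k2+k2+q(j-k2-k2) else j)"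
        unfolding t_def by (rule ext) (simp add: mult_2 diff_diff_left)
      have tP: "t permutes {..<M}" unfolding t_alt M_def mult_2 by (rule perm3[OF cP dP qP])
      have key: "BE i j = AE (s i) (t j)" if iN: "i<N" and jM: "j<M" for i j
      proof -
        consider (r1c1) "i<k1" "j<k2" | (r1c2) "i<k1" "k2\<le>j" "j<2*k2" | (r1c3) "i<k1" "2*k2\<le>j"
          | (r2c1) "k1\<le>i" "i<2*k1" "j<k2" | (r2c2) "k1\<le>i" "i<2*k1" "k2\<le>j" "j<2*k2" | (r2c3) "k1\<le>i" "i<2*k1" "2*k2\<le>j"
          | (r3c1) "2*k1\<le>i" "j<k2" | (r3c2) "2*k1\<le>i" "k2\<le>j" "j<2*k2" | (r3c3) "2*k1\<le>i" "2*k2\<le>j" by linarith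
        then show ?thesis
        proof cases
        
        case r1c1 then show ?thesis using bl[of i] cl[of j] iN jM N_def M_def by (simp add: AE_def BE_def Aent_def Bent_def s_def t_def)
        next
        case r1c2 then show ?thesis using bl[of i] dl[of "j-k2"] iN jM N_def M_def by (simp add: AE_def BE_def Aent_def Bent_def s_def t_def)
        next
        case r1c3 then show ?thesis using bl[of i] ql[of "j-2*k2"] e12[rule_format, of i "j-2*k2"] iN jM N_def M_def by (simp add: AE_def BE_def Aent_def Bent_def s_def t_def)
        next
        case r2c1 then show ?thesis using al[of "i-k1"] cl[of j] iN jM N_def M_def by (simp add: AE_def BE_def Aent_def Bent_def s_def t_def)
        next
        case r2c2 then show ?thesis using al[of "i-k1"] dl[of "j-k2"] iN jM N_def M_def by (simp add: AE_def BE_def Aent_def Bent_def s_def t_def)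
        next
        case r2c3 then show ?thesis using al[of "i-k1"] ql[of "j-2*k2"] e12[rule_format, of "i-k1" "j-2*k2"] iN jM N_def M_def by (simp add: AE_def BE_def Aent_def Bent_def s_def t_def)
        next
        case r3c1 then show ?thesis using pl[of "i-2*k1"] cl[of j] e34[rule_format, of "i-2*k1" j] iN jM N_def M_def by (simp add: AE_def BE_def Aent_def Bent_def s_def t_def)
        next
        case r3c2 then show ?thesis using pl[of "i-2*k1"] dl[of "j-k2"] e34[rule_format, of "i-2*k1" "j-k2"] iN jM N_def M_def by (simp add: AE_def BE_def Aent_def Bent_def s_def t_def)
        next
        case r3c3 then show ?thesis using pl[of "i-2*k1"] ql[of "j-2*k2"] Yeq[rule_format, of "i-2*k1" "j-2*k2"] iN jM N_def M_def by (simp add: AE_def BE_def Aent_def Bent_def s_def t_def)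
        qed
      qed
      show ?thesis using sP tP key by blast
    next
      fix a b c d assume aP: "a permutes {..<k1}" and bP: "b permutes {..<k1}" and cP: "c permutes {..<k2}" and dP: "d permutes {..<k2}"
        and e12: "\<forall>i<k1. \<forall>j<n. X1$$(i,j) = X1$$(a i, q j) \<and> X2$$(i,j) = X2$$(b i, q j)"
        and e34: "\<forall>i<m. \<forall>j<k2. X4$$(i,j) = X3$$(p i, c j) \<and> X3$$(i,j) = X4$$(p i, d j)"
      have al: "a i < k1" if "i<k1" for i using perm_lt[OF aP that] .
      have bl: "b i < k1" if "i<k1" for i using perm_lt[OF bP that] .
      have cl: "c i < k2" if "i<k2" for i using perm_lt[OF cP that] .
      have dl: "d i < k2" if "i<k2" for i using perm_lt[OF dP that] .
      define s where "s = (\<lambda>i. if i<k1 then a i else if i<2*k1 then k1 + b (i-k1) else if i<2*k1+m then 2*k1+p(i-2*k1) else i)"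
      define t where "t = (\<lambda>j. if j<k2 then k2 + d j else if j<2*k2 then c (j-k2) else if j<2*k2+n then 2*k2+q(j-2*k2) else j)"
      have s_alt: "s = (\<lambda>i. if i<k1 then a i else if i<k1+k1 then k1 + b (i-k1) else if i<k1+k1+m then k1+k1+p(i-k1-k1) else i)"
        unfolding s_def by (rule ext) (simp add: mult_2 diff_diff_left)
      have sP: "s permutes {..<N}" unfolding s_alt N_def mult_2 by (rule perm3[OF aP bP pP])
      have tP: "t permutes {..<M}" unfolding t_def M_def by (rule perm3swap[OF cP dP qP])
      have key: "BE i j = AE (s i) (t j)" if iN: "i<N" and jM: "j<M" for i j
      proof -
        consider (r1c1) "i<k1" "j<k2" | (r1c2) "i<k1" "k2\<le>j" "j<2*k2" | (r1c3) "i<k1" "2*k2\<le>j"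
          | (r2c1) "k1\<le>i" "i<2*k1" "j<k2" | (r2c2) "k1\<le>i" "i<2*k1" "k2\<le>j" "j<2*k2" | (r2c3) "k1\<le>i" "i<2*k1" "2*k2\<le>j"
          | (r3c1) "2*k1\<le>i" "j<k2" | (r3c2) "2*k1\<le>i" "k2\<le>j" "j<2*k2" | (r3c3) "2*k1\<le>i" "2*k2\<le>j" by linarith
        then show ?thesis
        proof cases
        
        case r1c1 then show ?thesis using al[of i] dl[of j] iN jM N_def M_def by (simp add: AE_def BE_def Aent_def Bent_def s_def t_def)
        next
        case r1c2 then show ?thesis using al[of i] cl[of "j-k2"] iN jM N_def M_def by (simp add: AE_def BE_def Aent_def Bent_def s_def t_def)
        next
        case r1c3 then show ?thesis using al[of i] ql[of "j-2*k2"] e12[rule_format, of i "j-2*k2"] iN jM N_def M_def by (simp add: AE_def BE_def Aent_def Bent_def s_def t_def)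
        next
        case r2c1 then show ?thesis using bl[of "i-k1"] dl[of j] iN jM N_def M_def by (simp add: AE_def BE_def Aent_def Bent_def s_def t_def)
        next
        case r2c2 then show ?thesis using bl[of "i-k1"] cl[of "j-k2"] iN jM N_def M_def by (simp add: AE_def BE_def Aent_def Bent_def s_def t_def)
        next
        case r2c3 then show ?thesis using bl[of "i-k1"] ql[of "j-2*k2"] e12[rule_format, of "i-k1" "j-2*k2"] iN jM N_def M_def by (simp add: AE_def BE_def Aent_def Bent_def s_def t_def)
        next
        case r3c1 then show ?thesis using pl[of "i-2*k1"] dl[of j] e34[rule_format, of "i-2*k1" j] iN jM N_def M_def by (simp add: AE_def BE_def Aent_def Bent_def s_def t_def)
        next
        case r3c2 then show ?thesis using pl[of "i-2*k1"] cl[of "j-k2"] e34[rule_format, of "i-2*k1" "j-k2"] iN jM N_def M_def by (simp add: AE_def BE_def Aent_def Bent_def s_def t_def)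
        next
        case r3c3 then show ?thesis using pl[of "i-2*k1"] ql[of "j-2*k2"] Yeq[rule_format, of "i-2*k1" "j-2*k2"] iN jM N_def M_def by (simp add: AE_def BE_def Aent_def Bent_def s_def t_def)
        qed
      qed
      show ?thesis using sP tP key by blast
    qed
    then obtain s t where sP: "s permutes {..<N}" and tP: "t permutes {..<M}" and key: "\<forall>i<N. \<forall>j<M. BE i j = AE (s i) (t j)"
      by blast
    have "\<forall>i<N. \<forall>j<M. B$$(i,j) = A$$(s i, t j)"
      using key Ai Bi perm_lt[OF sP] perm_lt[OF tP] by simp
    then show "isomorphic_mat A B" using iso_char[OF AC BC] sP tP by blast
  qed
qed

end
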